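(* Let $\mathbb{E}$ be a finite-dimensional Euclidean space, $\mathcal{K}\subseteq\mathbb{E}$ a closed convex cone, $\mathcal{A}:\mathbb{E}\to\mathbb{R}^m$ a surjective linear map and $b\in\mathbb{R}^m$, and let $\mathcal{F}=\{x\in\mathcal{K}:\mathcal{A}x=b\}\neq\emptyset$. Suppose strict feasibility fails for $\mathcal{F}$ and let $\bar{\mathcal{K}}$ be the cone obtained by the facial reduction process. Then $\mathcal{A}(\operatorname{span}\bar{\mathcal{K}})$ is a subspace of dimension at most $m-\operatorname{maxsd}(\mathcal{F})$. Moreover, $\{x\in\bar{\mathcal{K}}:\mathcal{A}x=b\}$ contains at least $\operatorname{maxsd}(\mathcal{F})$ implicitly redundant constraints, i.e. $m-\dim\mathcal{A}(\operatorname{span}\bar{\mathcal{K}})\ge\operatorname{maxsd}(\mathcal{F})$.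
   Context: Strict feasibility of $\{x\in C:\mathcal{A}x=b\}$ with respect to a closed convex cone $C$ means that this set contains a point of $\operatorname{relint}(C)$. For a cone $C$, $C^*$ is its dual cone and $C^\perp$ its orthogonal complement. Facial reduction process: set $\mathcal{K}^0=\mathcal{K}$, $k=0$; while strict feasibility fails for $\{x\in\mathcal{K}^k:\mathcal{A}x=b\}$ with respect to $\mathcal{K}^k$, increase $k$ by one, choose $y^k\in\mathbb{R}^m$ with $\mathcal{A}^*y^k\in(\mathcal{K}^{k-1})^*\setminus(\mathcal{K}^{k-1})^\perp$ and $\langle b,y^k\rangle=0$, and set $\mathcal{K}^k=\mathcal{K}^{k-1}\cap(\mathcal{A}^*y^k)^\perp$. The cone obtained by the process is the final $\bar{\mathcal{K}}=\mathcal{K}^k=\mathcal{K}\cap\bigcap_{i=1}^k(\mathcal{A}^*y^i)^\perp$. The max-singularity degree $\operatorname{maxsd}(\mathcal{F})$ is the largest number of (nontrivial) iterations over all runs of this facial reduction process on $\mathcal{F}$. The number of implicitly redundant constraints in $\{x\in\bar{\mathcal{K}}:\mathcal{A}x=b\}$ is the number of redundant equalities among $\mathcal{A}x=b$ when $x$ is restricted to $\operatorname{span}\bar{\mathcal{K}}$, i.e. $m$ minus the rank of $\mathcal{A}$ restricted to $\operatorname{span}\bar{\mathcal{K}}$. *)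

theory Defs
  imports "HOL-Analysis.Analysis"
begin

definition dual_cone :: "'a::real_inner set \<Rightarrow> 'a set" where
  "dual_cone C = {y. \<forall>x\<in>C. 0 \<le> inner y x}"

definition strictly_feasible ::
  "'a::euclidean_space set \<Rightarrow> ('a \<Rightarrow> 'b::euclidean_space) \<Rightarrow> 'b \<Rightarrow> bool" where
  "strictly_feasible C A b \<longleftrightarrow> (\<exists>x\<in>rel_interior C. A x = b)"

definition fr_cone ::
  "'a::euclidean_space set \<Rightarrow> ('a \<Rightarrow> 'b::euclidean_space) \<Rightarrow> 'b list \<Rightarrow> 'a set" where
  "fr_cone K A ys = K \<inter> (\<Inter>y\<in>set ys. orthogonal_comp {adjoint A y})"

definition fr_run ::
  "'a::euclidean_space set \<Rightarrow> ('a \<Rightarrow> 'b::euclidean_space) \<Rightarrow> 'b \<Rightarrow> 'b list \<Rightarrow> bool" where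
  "fr_run K A b ys \<longleftrightarrow>
     (\<forall>i<length ys.
        \<not> strictly_feasible (fr_cone K A (take i ys)) A b \<and>
        adjoint A (ys ! i) \<in> dual_cone (fr_cone K A (take i ys))
                              - orthogonal_comp (fr_cone K A (take i ys)) \<and>
        inner b (ys ! i) = 0) \<and>
     strictly_feasible (fr_cone K A ys) A b"

definition maxsd ::
  "'a::euclidean_space set \<Rightarrow> ('a \<Rightarrow> 'b::euclidean_space) \<Rightarrow> 'b \<Rightarrow> nat" where
  "maxsd K A b = Sup {length ys | ys. fr_run K A b ys}"

definition implicitly_redundant ::
  "'a::euclidean_space set \<Rightarrow> ('a \<Rightarrow> real^'m) \<Rightarrow> nat" where
  "implicitly_redundant Kbar A = CARD('m) - dim (A ` span Kbar)"

end

theory Submission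
  imports Defs
begin

lemma relint_zero:
  fixes S :: "'a::euclidean_space set"
  assumes "convex S" "z \<in> rel_interior S" "\<forall>x\<in>S. 0 \<le> inner c x" "inner c z = 0" "x \<in> S"
  shows "inner c x = 0"
proof -
  have "x \<in> affine hull S" using assms(5) by (simp add: hull_inc)
  then obtain m where m: "m > 1" "\<forall>e. e > 1 \<and> e \<le> m \<longrightarrow> (1 - e) *\<^sub>R x + e *\<^sub>R z \<in> S"
    using convex_rel_interior_if[OF assms(1,2)] by blast
  have "(1 - m) *\<^sub>R x + m *\<^sub>R z \<in> S" using m by auto
  then have "0 \<le> inner c ((1 - m) *\<^sub>R x + m *\<^sub>R z)" using assms(3) by blast
  then have "0 \<le> (1 - m) * inner c x" using assms(4) by (simp add: inner_add_right)
  then have "inner c x \<le> 0" using m(1)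
    by (simp add: zero_le_mult_iff)
  then show ?thesis using assms(3,5) by force
qed

lemma fr_cone_take_Suc:
  "i < length ys \<Longrightarrow> fr_cone K A (take (Suc i) ys) = fr_cone K A (take i ys) \<inter> orthogonal_comp {adjoint A (ys ! i)}"
  by (auto simp: fr_cone_def take_Suc_conv_app_nth)

lemma convex_fr_cone: "convex K \<Longrightarrow> convex (fr_cone K A ys)"
  unfolding fr_cone_def
  by (intro convex_Int convex_INT) (auto intro: subspace_imp_convex subspace_orthogonal_comp)

lemma fr_cone_subset: "fr_cone K A ys \<subseteq> orthogonal_comp {adjoint A y}" if "y \<in> set ys"
  using that by (auto simp: fr_cone_def)

lemma fr_cone_anti: "fr_cone K A ys \<subseteq> fr_cone K A (take i ys)"
  by (auto simp: fr_cone_def dest: in_set_takeD)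

lemma final_subset:
  fixes A :: "'a::euclidean_space \<Rightarrow> 'b::euclidean_space"
  assumes "convex K" "linear A" "fr_run K A b ys" "fr_run K A b zs"
  shows "fr_cone K A ys \<subseteq> fr_cone K A zs"
proof -
  obtain x0 where x0: "x0 \<in> rel_interior (fr_cone K A ys)" "A x0 = b"
    using assms(3) by (auto simp: fr_run_def strictly_feasible_def)
  have cv: "convex (fr_cone K A ys)" using convex_fr_cone[OF assms(1)] .
  have x0S: "x0 \<in> fr_cone K A ys" using x0(1) rel_interior_subset by blast
  have "fr_cone K A ys \<subseteq> fr_cone K A (take i zs)" if "i \<le> length zs" for i
    using that
  proof (induction i)
    case 0 then show ?case by (auto simp: fr_cone_def)
  next
    case (Suc i)
    then have IH: "fr_cone K A ys \<subseteq> fr_cone K A (take i zs)" and il: "i < length zs" by auto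
    let ?c = "adjoint A (zs ! i)"
    have dual: "?c \<in> dual_cone (fr_cone K A (take i zs))" and bz: "inner b (zs ! i) = 0"
      using assms(4) il by (auto simp: fr_run_def)
    have nn: "\<forall>x\<in>fr_cone K A ys. 0 \<le> inner ?c x" using dual IH by (auto simp: dual_cone_def)
    have "inner ?c x0 = 0"
      using bz x0(2) adjoint_works[OF assms(2), of x0 "zs ! i"]
      by (simp add: inner_commute)
    then have "\<forall>x\<in>fr_cone K A ys. inner ?c x = 0"
      using relint_zero[OF cv x0(1) nn] by blast
    then have "fr_cone K A ys \<subseteq> orthogonal_comp {?c}"
      by (auto simp: orthogonal_comp_def orthogonal_def)
    then show ?case using IH fr_cone_take_Suc[OF il, of K A] by blast
  qed
  from this[of "length zs"] show ?thesis by simp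
qed

lemma run_dim:
  fixes A :: "'a::euclidean_space \<Rightarrow> 'b::euclidean_space"
  assumes "linear A" "fr_run K A b zs"
  shows "dim (set (take i zs)) = min i (length zs)"
proof (induction i)
  case 0 then show ?case by simp
next
  case (Suc i)
  show ?case
  proof (cases "i < length zs")
    case False then show ?thesis using Suc by (simp add: min_def)
  next
    case il: True
    have ni: "adjoint A (zs ! i) \<notin> orthogonal_comp (fr_cone K A (take i zs))"
      using assms(2) il by (auto simp: fr_run_def)
    have "zs ! i \<notin> span (set (take i zs))"
    proof
      assume sp: "zs ! i \<in> span (set (take i zs))"
      obtain x where x: "x \<in> fr_cone K A (take i zs)" "\<not> orthogonal (adjoint A (zs ! i)) x"
        using ni by (auto simp: orthogonal_comp_def orthogonal_commute)
      have sub: "subspace {y. inner (A x) y = 0}"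
        by (auto simp: subspace_def inner_add_right)
      have "set (take i zs) \<subseteq> {y. inner (A x) y = 0}"
      proof
        fix y assume "y \<in> set (take i zs)"
        then have "x \<in> orthogonal_comp {adjoint A y}" using fr_cone_subset x(1) by blast
        then have "inner x (adjoint A y) = 0"
          by (auto simp: orthogonal_comp_def orthogonal_def inner_commute)
        then show "y \<in> {y. inner (A x) y = 0}" using adjoint_works[OF assms(1)] by simp
      qed
      then have "span (set (take i zs)) \<subseteq> {y. inner (A x) y = 0}"
        using sub span_minimal by blast
      then have "inner (A x) (zs ! i) = 0" using sp by blast
      then have "inner x (adjoint A (zs ! i)) = 0" using adjoint_works[OF assms(1)] by simp
      then show False using x(2) by (simp add: orthogonal_def inner_commute)
    qed
    then show ?thesis using Suc il
      by (simp add: take_Suc_conv_app_nth dim_insert min_def)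
  qed
qed

theorem corollary4p2:
  fixes K :: "'a::euclidean_space set"
    and A :: "'a \<Rightarrow> real^'m"
    and b :: "real^'m"
    and ys :: "(real^'m) list"
  assumes "closed K" and "convex K" and "cone K"
    and "linear A" and "surj A"
    and "{x\<in>K. A x = b} \<noteq> {}"
    and "\<not> strictly_feasible K A b"
    and "fr_run K A b ys"
  shows "subspace (A ` span (fr_cone K A ys))
       \<and> int (dim (A ` span (fr_cone K A ys))) \<le> int CARD('m) - int (maxsd K A b)
       \<and> implicitly_redundant (fr_cone K A ys) A \<ge> maxsd K A b
       \<and> int CARD('m) - int (dim (A ` span (fr_cone K A ys))) \<ge> int (maxsd K A b)"
proof -
  let ?L = "{length ys | ys. fr_run K A b ys}"
  have lenbd: "length zs \<le> CARD('m)" if "fr_run K A b zs" for zs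
    using run_dim[OF assms(4) that, of "length zs"] dim_subset_UNIV_cart[of "set zs"] by simp
  have fin: "finite ?L"
    by (rule finite_subset[of _ "{..CARD('m)}"]) (auto dest: lenbd)
  have ne: "?L \<noteq> {}" using assms(8) by blast
  have "maxsd K A b \<in> ?L" unfolding maxsd_def
    using fin ne Max_in[OF fin ne] by (simp only: Sup_nat_def if_False)
  then obtain zs where zs: "fr_run K A b zs" "length zs = maxsd K A b" by auto
  let ?V = "A ` span (fr_cone K A ys)"
  have subV: "subspace ?V" using assms(4) linear_subspace_image subspace_span by blast
  have dz: "dim (set zs) = length zs" using run_dim[OF assms(4) zs(1), of "length zs"] by simp
  have incl: "fr_cone K A ys \<subseteq> fr_cone K A zs" using final_subset[OF assms(2,4,8) zs(1)] .
  let ?W = "{y \<in> UNIV. \<forall>x \<in> span (set zs). orthogonal x y}"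
  have VW: "?V \<subseteq> ?W"
  proof
    fix v assume "v \<in> ?V"
    then obtain u where u: "u \<in> span (fr_cone K A ys)" "v = A u" by auto
    have "span (fr_cone K A ys) \<subseteq> orthogonal_comp (adjoint A ` set zs)"
    proof (rule span_minimal)
      show "fr_cone K A ys \<subseteq> orthogonal_comp (adjoint A ` set zs)"
        using incl fr_cone_subset[of _ zs K A] by (fastforce simp: orthogonal_comp_def)
    qed (rule subspace_orthogonal_comp)
    then have uo: "\<forall>z\<in>set zs. inner (A u) z = 0"
      using u(1) adjoint_works[OF assms(4), of u]
      by (fastforce simp: orthogonal_comp_def orthogonal_def inner_commute)
    have sub: "subspace {z. inner z (A u) = 0}" by (auto simp: subspace_def inner_add_left)
    have "span (set zs) \<subseteq> {z. inner z (A u) = 0}"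
    proof (rule span_minimal[OF _ sub])
      show "set zs \<subseteq> {z. inner z (A u) = 0}" using uo by (auto simp: inner_commute)
    qed
    then show "v \<in> ?W" using u(2) by (auto simp: orthogonal_def)
  qed
  have "dim ?W + dim (span (set zs)) = dim (UNIV :: (real^'m) set)"
    using dim_subspace_orthogonal_to_vectors[of "span (set zs)" UNIV] by simp
  moreover have "dim (UNIV :: (real^'m) set) = CARD('m)" by simp
  moreover have "dim ?V \<le> dim ?W" using VW by (rule dim_subset)
  ultimately have "dim ?V + maxsd K A b \<le> CARD('m)" using dz zs(2) by simp
  then show ?thesis using subV by (auto simp: implicitly_redundant_def)
qed

end
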